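(* Let $d \ge 2$ and identify $\mathbb{R}^{d-1}$ with $\mathbb{R}^{d-1}\times\{0\} \subset \mathbb{R}^d$, writing points of $\mathbb{R}^d$ as $(z,t)$ with $z \in \mathbb{R}^{d-1}$, $t \in \mathbb{R}$. For every $\varepsilon > 0$ and $0 < \delta < 1$ there exists $0 < \kappa < 1$ with the following property: for any ball $\mathcal{C} \subset \mathbb{R}^{d-1}$ there exists $\tau^* > 0$ such that for every $0 < \tau < \tau^*$ there exists a diffeomorphism $H : \mathbb{R}^d \to \mathbb{R}^d$ such that (i) $H$ has derivative $\varepsilon$-close to the identity (i.e. $\|DH(x) - \mathrm{id}\| \le \varepsilon$ for all $x$); (ii) $H$ equals the identity outside $\mathcal{C}\times[-\tau,\tau]$; (iii) if $(z,t) \in (1-\delta)(\mathcal{C}\times[-\tau,\tau])$ then $H(z,t) = (z,\kappa t)$.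
   Context: A subset $B$ of a finite-dimensional real vector space $V$ is called a ball if there exists a norm on $V$ such that $B$ is the closed unit ball of $V$ with respect to that norm. *)

theory Defs
  imports "HOL-Analysis.Analysis"
begin

text \<open>A norm on a real vector space (an arbitrary one, not necessarily the ambient norm).\<close>
definition is_norm :: "('a::real_vector \<Rightarrow> real) \<Rightarrow> bool" where
  "is_norm N \<longleftrightarrow>
     (\<forall>x. 0 \<le> N x) \<and> (\<forall>x. N x = 0 \<longleftrightarrow> x = 0) \<and>
     (\<forall>c x. N (c *\<^sub>R x) = \<bar>c\<bar> * N x) \<and> (\<forall>x y. N (x + y) \<le> N x + N y)"

text \<open>A ball: the closed unit ball of some norm.\<close>
definition is_ball :: "'a::real_vector set \<Rightarrow> bool" where
  "is_ball B \<longleftrightarrow> (\<exists>N. is_norm N \<and> B = {x. N x \<le> 1})"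

text \<open>A (C^1) diffeomorphism of a Euclidean space onto itself.\<close>
definition C1_diffeo :: "('a::euclidean_space \<Rightarrow> 'a) \<Rightarrow> bool" where
  "C1_diffeo H \<longleftrightarrow> bij H \<and>
     (\<exists>D. (\<forall>x. (H has_derivative blinfun_apply (D x)) (at x)) \<and> continuous_on UNIV D) \<and>
     (\<exists>D. (\<forall>x. (inv H has_derivative blinfun_apply (D x)) (at x)) \<and> continuous_on UNIV D)"

end

theory Submission
  imports Defs
begin


lemma perturb_diffeo:
  fixes u :: "'a::euclidean_space \<times> real \<Rightarrow> real" and u' :: "'a \<times> real \<Rightarrow> 'a \<times> real \<Rightarrow> real"
  assumes der: "\<And>x. (u has_derivative u' x) (at x)"
    and cont: "\<And>v. continuous_on UNIV (\<lambda>x. u' x v)"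
    and bnd: "\<And>x v. \<bar>u' x v\<bar> \<le> c * norm v" and c0: "0 \<le> c" and c1: "c < 1"
  shows "C1_diffeo (\<lambda>p. (fst p, snd p + u p))"
    and "\<And>x. ((\<lambda>p. (fst p, snd p + u p)) has_derivative (\<lambda>v. (fst v, snd v + u' x v))) (at x)"
    and "\<And>x. onorm (\<lambda>v. (fst v, snd v + u' x v) - v) \<le> c"
proof -
  define H where "H = (\<lambda>p. (fst p, snd p + u p))"
  define H' where "H' = (\<lambda>x v. (fst v, snd v + u' x v))"
  have lin: "\<And>x. bounded_linear (u' x)" using der has_derivative_bounded_linear by blast
  show dH: "\<And>x. ((\<lambda>p. (fst p, snd p + u p)) has_derivative (\<lambda>v. (fst v, snd v + u' x v))) (at x)"
    by (auto intro!: derivative_eq_intros der)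
  have dH': "\<And>x. (H has_derivative H' x) (at x)" using dH unfolding H_def H'_def .
  have blH: "\<And>x. bounded_linear (H' x)" using dH' has_derivative_bounded_linear by blast
  have diff: "\<And>v. H' x v - v = (0, u' x v)" for x by (simp add: H'_def prod_eq_iff)
  show "\<And>x. onorm (\<lambda>v. (fst v, snd v + u' x v) - v) \<le> c"
    using diff unfolding H'_def
    by (intro onorm_le) (simp add: bnd)
  have onu: "onorm (u' x) \<le> c" for x by (intro onorm_le) (use bnd in auto)
  have lip: "\<bar>u x - u y\<bar> \<le> c * norm (x - y)" for x y
    using differentiable_bound[of UNIV u u' c x y] der onu by auto
  have Hdiff: "H x - H y = (x - y) + (0, u x - u y)" for x y by (simp add: H_def prod_eq_iff)
  have inj_est: "(1 - c) * norm (x - y) \<le> norm (H x - H y)" for x y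
  proof -
    have "norm (x - y) \<le> norm (H x - H y) + norm ((0::'a, u x - u y))"
      using norm_triangle_ineq4[of "H x - H y" "(0::'a, u x - u y)"] Hdiff[of x y] by simp
    also have "norm ((0::'a, u x - u y)) = \<bar>u x - u y\<bar>" by (simp add: norm_Pair)
    finally show ?thesis using lip[of x y] by (simp add: algebra_simps)
  qed
  have injH: "inj H"
  proof (rule injI)
    fix x y assume "H x = H y"
    then have "(1 - c) * norm (x - y) \<le> 0" using inj_est[of x y] by simp
    then show "x = y" using c1 by (simp add: mult_le_0_iff)
  qed
  have surjH: "surj H"
  proof -
    have "\<exists>x. H x = y" for y
    proof -
      define T where "T = (\<lambda>x. y - (0::'a, u x))"
      have "\<forall>a b. dist (T a) (T b) \<le> c * dist a b"
        by (auto simp: T_def dist_norm norm_Pair lip abs_minus_commute)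
      then obtain x where "T x = x" using banach_fix_type[OF c0 c1] by blast
      then have "H x = y" unfolding T_def H_def by (auto simp: prod_eq_iff)
      then show ?thesis by blast
    qed
    then show ?thesis by (metis surjI)
  qed
  have bijH: "bij H" using injH surjH by (simp add: bij_def)
  define g where "g = inv H"
  have Hg: "H (g y) = y" for y using surjH by (simp add: g_def surj_f_inv_f)
  have gH: "g (H x) = x" for x using injH by (simp add: g_def)
  have glip: "(1 - c) * norm (g a - g b) \<le> norm (a - b)" for a b
    using inj_est[of "g a" "g b"] by (simp add: Hg)
  have gcont: "continuous_on UNIV g"
  proof (rule continuous_onI)
    fix x e assume "x \<in> (UNIV::('a\<times>real) set)" "(0::real) < e"
    show "\<exists>d>0. \<forall>x'\<in>UNIV. dist x' x < d \<longrightarrow> dist (g x') (g x) \<le> e"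
    proof (intro exI[of _ "(1 - c) * e"] conjI ballI impI)
      show "0 < (1 - c) * e" using c1 \<open>0 < e\<close> by simp
      fix x' assume "dist x' x < (1 - c) * e"
      then have "(1 - c) * dist (g x') (g x) < (1 - c) * e"
        using glip[of x' x] by (simp add: dist_norm)
      then show "dist (g x') (g x) \<le> e" using c1 by simp
    qed
  qed
  have den: "1 + u' x (0, 1) > 0" for x
  proof -
    have "\<bar>u' x (0,1)\<bar> \<le> c" using bnd[of x "(0,1)"] by (simp add: norm_Pair)
    then show ?thesis using c1 by linarith
  qed
  define G' where "G' = (\<lambda>y v. (fst v, (snd v - u' (g y) (fst v, 0)) / (1 + u' (g y) (0, 1))))"
  have ulin: "u' x (a, b) = u' x (a, 0) + b * u' x (0, 1)" for x a b
  proof -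
    have e: "(a, b) = (a, 0) + b *\<^sub>R (0::'a, 1::real)" by simp
    show ?thesis
      unfolding e by (simp only: linear_add[OF bounded_linear.linear[OF lin[of x]]]
          linear_scale[OF bounded_linear.linear[OF lin[of x]]] real_scaleR_def)
  qed
  have blG: "bounded_linear (G' y)" for y
  proof -
    have b1: "bounded_linear (\<lambda>v::'a\<times>real. u' (g y) (fst v, 0))"
      by (rule bounded_linear_compose[OF lin[of "g y"]])
         (intro bounded_linear_Pair bounded_linear_fst bounded_linear_zero)
    have b2: "bounded_linear (\<lambda>v::'a\<times>real. snd v - u' (g y) (fst v, 0))"
      by (intro bounded_linear_sub bounded_linear_snd b1)
    have b3: "bounded_linear (\<lambda>v::'a\<times>real. (snd v - u' (g y) (fst v, 0)) / (1 + u' (g y) (0, 1)))"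
      by (rule bounded_linear_compose[OF bounded_linear_divide b2])
    show ?thesis unfolding G'_def by (intro bounded_linear_Pair bounded_linear_fst b3)
  qed
  have GH: "G' y \<circ> H' (g y) = id" for y
  proof
    fix v :: "'a \<times> real"
    obtain a b where v: "v = (a, b)" by (cases v)
    have "(snd v + u' (g y) v - u' (g y) (fst v, 0)) = b * (1 + u' (g y) (0,1))"
      using ulin[of "g y" a b] by (simp add: v algebra_simps)
    then show "(G' y \<circ> H' (g y)) v = id v"
      using den[of "g y"] by (simp add: G'_def H'_def v)
  qed
  have dG: "(g has_derivative G' y) (at y)" for y
  proof (rule has_derivative_inverse_basic[where g=g and y=y and T=UNIV, OF dH'[of "g y"] blG[of y] GH[of y] _ open_UNIV UNIV_I])
    show "continuous (at y) g" using gcont continuous_on_eq_continuous_at open_UNIV by blast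
    show "H (g z) = z" for z by (rule Hg)
  qed
  show "C1_diffeo (\<lambda>p. (fst p, snd p + u p))"
    unfolding C1_diffeo_def H_def[symmetric]
  proof (intro conjI)
    show "bij H" by fact
    show "\<exists>D. (\<forall>x. (H has_derivative blinfun_apply (D x)) (at x)) \<and> continuous_on UNIV D"
    proof (intro exI[of _ "\<lambda>x. Blinfun (H' x)"] conjI allI)
      show "(H has_derivative blinfun_apply (Blinfun (H' x))) (at x)" for x
        using dH' blH by (simp add: bounded_linear_Blinfun_apply)
      show "continuous_on UNIV (\<lambda>x. Blinfun (H' x))"
      proof (intro continuous_on_blinfun_componentwise)
        fix i :: "'a \<times> real"
        have "continuous_on UNIV (\<lambda>x. H' x i)" unfolding H'_def
          by (intro continuous_on_Pair continuous_on_add continuous_on_const cont)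
        then show "continuous_on UNIV (\<lambda>x. blinfun_apply (Blinfun (H' x)) i)"
          by (simp add: bounded_linear_Blinfun_apply blH)
      qed
    qed
    show "\<exists>D. (\<forall>x. (inv H has_derivative blinfun_apply (D x)) (at x)) \<and> continuous_on UNIV D"
    proof (intro exI[of _ "\<lambda>y. Blinfun (G' y)"] conjI allI)
      show "(inv H has_derivative blinfun_apply (Blinfun (G' y))) (at y)" for y
        using dG blG by (simp add: bounded_linear_Blinfun_apply g_def)
      show "continuous_on UNIV (\<lambda>y. Blinfun (G' y))"
      proof (intro continuous_on_blinfun_componentwise)
        fix i :: "'a \<times> real"
        have cg: "continuous_on UNIV (\<lambda>y. u' (g y) w)" for w
          using continuous_on_compose2[OF cont[of w] gcont] by simp
        have "continuous_on UNIV (\<lambda>y. (snd i - u' (g y) (fst i, 0)) / (1 + u' (g y) (0, 1)))"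
          by (intro continuous_on_divide continuous_on_diff continuous_on_add continuous_on_const cg)
             (use den in \<open>auto simp: less_le\<close>)
        then have "continuous_on UNIV (\<lambda>y. G' y i)" unfolding G'_def
          by (intro continuous_on_Pair continuous_on_const)
        then show "continuous_on UNIV (\<lambda>y. blinfun_apply (Blinfun (G' y)) i)"
          by (simp add: bounded_linear_Blinfun_apply blG)
      qed
    qed
  qed
qed



definition m2 :: "real \<Rightarrow> real" where "m2 x = (max 0 x)^2"

lemma m2_deriv: "(m2 has_real_derivative 2 * max 0 x) (at x)"
proof (cases "x < 0")
  case True
  have "((\<lambda>_. 0::real) has_real_derivative 0) (at x)" by simp
  have "(m2 has_real_derivative 0) (at x)"
    by (rule has_field_derivative_transform_within_open[of "\<lambda>_. 0" 0 x "{..<0}"])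
       (use True in \<open>auto simp: m2_def\<close>)
  then show ?thesis using True by simp
next
  case False
  show ?thesis
  proof (cases "x > 0")
    case True
    have "((\<lambda>y. y^2) has_real_derivative 2 * x) (at x)"
      by (auto intro!: derivative_eq_intros)
    then have "(m2 has_real_derivative 2 * x) (at x)"
      by (rule has_field_derivative_transform_within_open[of "\<lambda>y. y^2" _ x "{0<..}"])
         (use True in \<open>auto simp: m2_def\<close>)
    then show ?thesis using True by simp
  next
    case False
    with \<open>\<not> x < 0\<close> have x0: "x = 0" by simp
    have "((\<lambda>y. (m2 y - m2 0) / (y - 0)) \<longlongrightarrow> 0) (at 0)"
    proof (rule Lim_null_comparison[where g="\<lambda>y. \<bar>y\<bar>"])
      show "\<forall>\<^sub>F y in at 0. norm ((m2 y - m2 0) / (y - 0)) \<le> \<bar>y\<bar>"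
        by (auto simp: m2_def power2_eq_square abs_mult max_def divide_simps)
      show "((\<lambda>y::real. \<bar>y\<bar>) \<longlongrightarrow> 0) (at 0)"
        using tendsto_rabs[OF tendsto_ident_at[of "0::real" UNIV]] by simp
    qed
    then show ?thesis using x0 by (simp add: has_field_derivative_iff)
  qed
qed

definition sp :: "real \<Rightarrow> real" where
  "sp u = 2 * m2 u - 4 * m2 (u - 1/2) + 2 * m2 (u - 1)"
definition sp' :: "real \<Rightarrow> real" where
  "sp' u = 4 * max 0 u - 8 * max 0 (u - 1/2) + 4 * max 0 (u - 1)"

lemma sp_deriv: "(sp has_real_derivative sp' u) (at u)"
  unfolding sp_def[abs_def] sp'_def
  by (auto intro!: derivative_eq_intros DERIV_chain2[OF m2_deriv])

lemma sp_deriv_compose[derivative_intros]: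
  "(f has_derivative f') F \<Longrightarrow> F = at x within S \<Longrightarrow>
   ((\<lambda>x. sp (f x)) has_derivative (\<lambda>h. sp' (f x) * f' h)) F"
proof -
  assume f: "(f has_derivative f') F" and F: "F = at x within S"
  have "(sp has_derivative (\<lambda>h. sp' (f x) * h)) (at (f x))"
    using sp_deriv[of "f x"] by (simp add: has_field_derivative_def)
  from has_derivative_compose[OF f[unfolded F] this] show ?thesis using F by simp
qed

lemma sp_le0: "u \<le> 0 \<Longrightarrow> sp u = 0"
  by (simp add: sp_def m2_def)
lemma sp_ge1: assumes "u \<ge> 1" shows "sp u = 1"
proof -
  have "sp u = 2*u^2 - 4*(u-1/2)^2 + 2*(u-1)^2"
    using assms by (simp add: sp_def m2_def max_def)
  also have "\<dots> = 1" by (simp add: power2_eq_square algebra_simps)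
  finally show ?thesis .
qed
lemma sp_bounds: "0 \<le> sp u \<and> sp u \<le> 1"
proof -
  consider "u \<le> 0" | "0 \<le> u" "u \<le> 1/2" | "1/2 \<le> u" "u \<le> 1" | "1 \<le> u" by linarith
  then show ?thesis
  proof cases
    case 2
    then have "sp u = 2*(u*u)" by (simp add: sp_def m2_def max_def power2_eq_square)
    moreover have "u*u \<le> 1/2 * 1/2" using 2 mult_mono[of u "1/2" u "1/2"] by simp
    moreover have "u*u \<ge> 0" by simp
    ultimately show ?thesis by linarith
  next
    case 3
    then have "sp u = 2*u^2 - 4*(u-1/2)^2" by (simp add: sp_def m2_def max_def)
    also have "\<dots> = 1 - 2*((1-u)*(1-u))" by (simp add: power2_eq_square algebra_simps)
    finally have e: "sp u = 1 - 2*((1-u)*(1-u))" .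
    have "(1-u)*(1-u) \<le> 1/2 * 1/2" using 3 mult_mono[of "1-u" "1/2" "1-u" "1/2"] by simp
    moreover have "(1-u)*(1-u) \<ge> 0" by simp
    ultimately show ?thesis using e by linarith
  qed (simp_all add: sp_le0 sp_ge1)
qed
lemma sp'_bounds: "0 \<le> sp' u \<and> sp' u \<le> 2"
  unfolding sp'_def max_def by auto
lemma sp'_ge1: "u \<ge> 1 \<Longrightarrow> sp' u = 0"
  unfolding sp'_def max_def by auto
lemma sp'_cont: "continuous_on UNIV sp'"
  unfolding sp'_def[abs_def] by (intro continuous_intros)
lemma sp_cont: "continuous_on UNIV sp"
  unfolding sp_def[abs_def] m2_def by (intro continuous_intros)



lemma sp_real_deriv[derivative_intros]:
  "(f has_real_derivative f') F \<Longrightarrow> F = at x within S \<Longrightarrow>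
   ((\<lambda>x. sp (f x)) has_real_derivative sp' (f x) * f') F"
  using DERIV_chain2[OF sp_deriv, of f f' x S] by simp

lemma psi_exists:
  fixes \<tau> \<delta> s :: real assumes tau: "\<tau> > 0" and d0: "0 < \<delta>" and d1: "\<delta> < 1" and s0: "0 \<le> s"
  shows "\<exists>\<psi> \<psi>'. (\<forall>t. (\<psi> has_real_derivative \<psi>' t) (at t)) \<and> continuous_on UNIV \<psi>' \<and>
     (\<forall>t. \<bar>\<psi> t\<bar> \<le> s * \<tau>) \<and> (\<forall>t. \<bar>\<psi>' t\<bar> \<le> s * (1 + 4 / (1 - (1 - \<delta>)^2))) \<and>
     (\<forall>t. \<tau> \<le> \<bar>t\<bar> \<longrightarrow> \<psi> t = 0) \<and> (\<forall>t. \<bar>t\<bar> \<le> (1 - \<delta>) * \<tau> \<longrightarrow> \<psi> t = - s * t)"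
proof -
  define a where "a = (1 - \<delta>) * \<tau>"
  define D where "D = \<tau>^2 - a^2"
  have a0: "0 < a" "a < \<tau>" using tau d0 d1 by (auto simp: a_def)
  have D0: "D > 0" using a0 unfolding D_def by (simp add: power_strict_mono)
  have Deq: "D = \<tau>^2 * (1 - (1 - \<delta>)^2)" by (simp add: D_def a_def power2_eq_square algebra_simps)
  define q where "q t = (t^2 - a^2) / D" for t
  define \<gamma> where "\<gamma> t = 1 - sp (q t)" for t
  define \<psi> where "\<psi> t = - s * t * \<gamma> t" for t
  define \<psi>' where "\<psi>' t = - s * (\<gamma> t + t * (- (sp' (q t) * (2 * t / D))))" for t
  have der: "(\<psi> has_real_derivative \<psi>' t) (at t)" for t
    unfolding \<psi>_def[abs_def] \<psi>'_def \<gamma>_def[abs_def] q_def[abs_def]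
    using D0 by (auto intro!: derivative_eq_intros simp: algebra_simps)
  have cont: "continuous_on UNIV \<psi>'"
    unfolding \<psi>'_def[abs_def] \<gamma>_def[abs_def] q_def[abs_def]
    by (intro continuous_intros continuous_on_compose2[OF sp_cont] continuous_on_compose2[OF sp'_cont])
       (use D0 in auto)
  have g01: "0 \<le> \<gamma> t \<and> \<gamma> t \<le> 1" for t using sp_bounds[of "q t"] by (simp add: \<gamma>_def)
  have big: "\<tau> \<le> \<bar>t\<bar> \<Longrightarrow> q t \<ge> 1" for t
  proof -
    assume "\<tau> \<le> \<bar>t\<bar>"
    then have "\<tau>^2 \<le> t^2" using tau by (metis abs_of_pos power2_abs power_mono less_imp_le)
    then show "q t \<ge> 1" using D0 by (simp add: q_def D_def field_simps)
  qed
  have small: "\<bar>t\<bar> \<le> a \<Longrightarrow> q t \<le> 0" for t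
  proof -
    assume "\<bar>t\<bar> \<le> a"
    then have "t^2 \<le> a^2" by (metis abs_ge_zero power2_abs power_mono)
    then show "q t \<le> 0" using D0 by (simp add: q_def divide_nonpos_pos)
  qed
  have z: "\<tau> \<le> \<bar>t\<bar> \<Longrightarrow> \<psi> t = 0" for t using big[of t] sp_ge1 by (simp add: \<psi>_def \<gamma>_def)
  have lin: "\<bar>t\<bar> \<le> (1 - \<delta>) * \<tau> \<Longrightarrow> \<psi> t = - s * t" for t
    using small[of t] sp_le0 by (simp add: \<psi>_def \<gamma>_def a_def)
  have b1: "\<bar>\<psi> t\<bar> \<le> s * \<tau>" for t
  proof (cases "\<tau> \<le> \<bar>t\<bar>")
    case True then show ?thesis using z[of t] s0 tau by simp
  next
    case False
    have "\<bar>\<psi> t\<bar> = s * (\<bar>t\<bar> * \<gamma> t)" using g01[of t] s0 by (simp add: \<psi>_def abs_mult)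
    also have "\<dots> \<le> s * (\<tau> * 1)" using False g01[of t]
      by (intro mult_left_mono mult_mono) (auto simp: s0)
    finally show ?thesis by simp
  qed
  have b2: "\<bar>\<psi>' t\<bar> \<le> s * (1 + 4 / (1 - (1 - \<delta>)^2))" for t
  proof -
    define E where "E = t * (sp' (q t) * (2 * t / D))"
    have E0: "0 \<le> E" using sp'_bounds[of "q t"] D0
      by (simp add: E_def) (metis mult_nonneg_nonneg zero_le_square mult.assoc mult.left_commute
           divide_nonneg_pos zero_le_numeral mult.commute)
    have E1: "E \<le> 4 / (1 - (1 - \<delta>)^2)"
    proof (cases "\<tau> \<le> \<bar>t\<bar>")
      case True then show ?thesis using sp'_ge1[OF big[OF True]] d0 d1
        by (simp add: E_def) (smt (verit) power_le_one)
    next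
      case False
      then have tt: "t^2 \<le> \<tau>^2" by (metis abs_ge_zero power2_abs power_mono not_le less_imp_le)
      have "E = sp' (q t) * (2 * t^2 / D)" by (simp add: E_def power2_eq_square)
      also have "\<dots> \<le> 2 * (2 * \<tau>^2 / D)" using sp'_bounds[of "q t"] tt D0
        by (intro mult_mono divide_right_mono) auto
      also have "\<dots> = 4 / (1 - (1 - \<delta>)^2)"
      proof -
        have X: "1 - (1 - \<delta>)^2 > 0" using D0 tau Deq by (simp add: zero_less_mult_iff)
        show ?thesis unfolding Deq using tau X by (simp add: field_simps)
      qed
      finally show ?thesis .
    qed
    have "\<psi>' t = - s * (\<gamma> t - E)" by (simp add: \<psi>'_def E_def)
    then have "\<bar>\<psi>' t\<bar> = s * \<bar>\<gamma> t - E\<bar>" using s0 by (simp add: abs_mult)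
    also have "\<dots> \<le> s * (1 + 4 / (1 - (1 - \<delta>)^2))"
      using g01[of t] E0 E1 s0 by (intro mult_left_mono) auto
    finally show ?thesis .
  qed
  show ?thesis
    by (rule exI[of _ \<psi>], rule exI[of _ \<psi>']) (use der cont b1 b2 z lin in blast)
qed



lemma bump_exists:
  fixes K C :: "'a::euclidean_space set" and r :: real
  assumes K: "compact K" and r: "r > 0" and marg: "\<And>z w. z \<in> K \<Longrightarrow> norm w < 2*r \<Longrightarrow> z + w \<in> C"
  shows "\<exists>\<phi> \<phi>' L. (\<forall>z. (\<phi> has_derivative \<phi>' z) (at z)) \<and> (\<forall>v. continuous_on UNIV (\<lambda>z. \<phi>' z v)) \<and>
     (\<forall>z v. \<bar>\<phi>' z v\<bar> \<le> L * norm v) \<and> (\<forall>z. 0 \<le> \<phi> z \<and> \<phi> z \<le> 1) \<and> (\<forall>z\<in>K. \<phi> z = 1) \<and>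
     (\<forall>z. z \<notin> C \<longrightarrow> \<phi> z = 0)"
proof -
  have "K \<subseteq> (\<Union>c\<in>K. ball c r)" using r by auto
  then obtain F where F: "F \<subseteq> K" "finite F" "K \<subseteq> (\<Union>c\<in>F. ball c r)"
    using compactE_image[OF K, of K "\<lambda>c. ball c r"] by blast
  define q where "q c z = ((z - c) \<bullet> (z - c) - r^2) / (3 * r^2)" for c z :: 'a
  define b where "b c z = 1 - sp (q c z)" for c z
  define b' where "b' c z v = - (sp' (q c z) * (2 * ((z - c) \<bullet> v) / (3 * r^2)))" for c z v :: 'a
  define S where "S z = (\<Sum>c\<in>F. b c z)" for z
  define \<phi> where "\<phi> z = sp (S z)" for z
  define \<phi>' where "\<phi>' z v = sp' (S z) * (\<Sum>c\<in>F. b' c z v)" for z v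
  define L where "L = 2 * (real (card F) * (8 / (3 * r)))"
  have dq: "(q c has_derivative (\<lambda>v. 2 * ((z - c) \<bullet> v) / (3 * r^2))) (at z)" for c z
  proof -
    have "((\<lambda>z. (z - c) \<bullet> (z - c)) has_derivative (\<lambda>v. (z - c) \<bullet> (v - 0) + (v - 0) \<bullet> (z - c))) (at z)"
      by (rule has_derivative_inner[OF has_derivative_diff[OF has_derivative_ident has_derivative_const]
          has_derivative_diff[OF has_derivative_ident has_derivative_const]])
    then have "((\<lambda>z. (z - c) \<bullet> (z - c)) has_derivative (\<lambda>v. 2 * ((z - c) \<bullet> v))) (at z)"
    proof -
      have "(\<lambda>v. (z - c) \<bullet> (v - 0) + (v - 0) \<bullet> (z - c)) = (\<lambda>v. 2 * ((z - c) \<bullet> v))"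
        by (rule ext) (simp add: inner_commute)
      with \<open>((\<lambda>z. (z - c) \<bullet> (z - c)) has_derivative _) (at z)\<close> show ?thesis by simp
    qed
    then have "((\<lambda>z. ((z - c) \<bullet> (z - c) - r^2)) has_derivative (\<lambda>v. 2 * ((z - c) \<bullet> v) - 0)) (at z)"
      by (rule has_derivative_diff[OF _ has_derivative_const])
    from has_derivative_mult_left[OF this, of "inverse (3 * r^2)"]
    show ?thesis unfolding q_def[abs_def] divide_inverse by simp
  qed
  have db: "(b c has_derivative b' c z) (at z)" for c z
  proof -
    have "((\<lambda>z. 1 - sp (q c z)) has_derivative (\<lambda>v. 0 - sp' (q c z) * (2 * ((z - c) \<bullet> v) / (3 * r^2)))) (at z)"
      by (rule has_derivative_diff[OF has_derivative_const sp_deriv_compose[OF dq refl]])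
    then show ?thesis by (simp add: b_def[abs_def] b'_def[abs_def])
  qed
  have dphi: "(\<phi> has_derivative \<phi>' z) (at z)" for z
    unfolding \<phi>_def[abs_def] \<phi>'_def S_def[abs_def]
    by (auto intro!: derivative_eq_intros db)
  have cq: "continuous_on UNIV (q c)" for c unfolding q_def[abs_def] by (intro continuous_intros) (use r in auto)
  have cb: "continuous_on UNIV (b c)" for c
    unfolding b_def[abs_def] by (intro continuous_intros continuous_on_compose2[OF sp_cont cq]) auto
  have cS: "continuous_on UNIV S" unfolding S_def[abs_def] by (intro continuous_intros cb)
  have cb': "continuous_on UNIV (\<lambda>z. b' c z v)" for c v
    unfolding b'_def by (intro continuous_intros continuous_on_compose2[OF sp'_cont cq]) (use r in auto)
  have cphi': "continuous_on UNIV (\<lambda>z. \<phi>' z v)" for v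
    unfolding \<phi>'_def by (intro continuous_intros continuous_on_compose2[OF sp'_cont cS] cb') auto
  have bb': "\<bar>b' c z v\<bar> \<le> (8 / (3 * r)) * norm v" for c z v
  proof (cases "q c z \<ge> 1")
    case True then show ?thesis using sp'_ge1[OF True] r by (simp add: b'_def)
  next
    case False
    then have "(z - c) \<bullet> (z - c) < 4 * r^2" using r by (simp add: q_def field_simps)
    then have "norm (z - c)^2 < (2 * r)^2" by (simp add: power2_norm_eq_inner power_mult_distrib)
    then have nz: "norm (z - c) < 2 * r" using r by (meson abs_of_pos power2_less_imp_less zero_less_mult_iff zero_less_numeral less_imp_le)
    have "\<bar>2 * ((z - c) \<bullet> v)\<bar> \<le> 2 * (norm (z - c) * norm v)"
      using Cauchy_Schwarz_ineq2[of "z - c" v] by simp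
    also have "\<dots> \<le> 2 * (2 * r * norm v)" using nz mult_right_mono[of "norm (z - c)" "2 * r" "norm v"] by (simp add: mult.commute mult.left_commute)
    finally have i: "\<bar>2 * ((z - c) \<bullet> v)\<bar> \<le> 4 * r * norm v" by simp
    have "\<bar>b' c z v\<bar> = sp' (q c z) * (\<bar>2 * ((z - c) \<bullet> v)\<bar> / (3 * r^2))"
      using sp'_bounds[of "q c z"] by (simp add: b'_def abs_mult)
    also have "\<dots> \<le> 2 * ((4 * r * norm v) / (3 * r^2))"
      using sp'_bounds[of "q c z"] i r by (intro mult_mono divide_right_mono) auto
    also have "\<dots> = (8 / (3 * r)) * norm v" using r by (simp add: field_simps power2_eq_square)
    finally show ?thesis .
  qed
  have bphi': "\<bar>\<phi>' z v\<bar> \<le> L * norm v" for z v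
  proof -
    have "\<bar>\<Sum>c\<in>F. b' c z v\<bar> \<le> (\<Sum>c\<in>F. \<bar>b' c z v\<bar>)" by (rule sum_abs)
    also have "\<dots> \<le> (\<Sum>c\<in>F. (8 / (3 * r)) * norm v)" by (intro sum_mono bb')
    also have "\<dots> = real (card F) * (8 / (3 * r)) * norm v" by simp
    finally have s: "\<bar>\<Sum>c\<in>F. b' c z v\<bar> \<le> real (card F) * (8 / (3 * r)) * norm v" .
    have "\<bar>\<phi>' z v\<bar> = sp' (S z) * \<bar>\<Sum>c\<in>F. b' c z v\<bar>"
      using sp'_bounds[of "S z"] by (simp add: \<phi>'_def abs_mult)
    also have "\<dots> \<le> 2 * (real (card F) * (8 / (3 * r)) * norm v)"
      using sp'_bounds[of "S z"] s by (intro mult_mono) auto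
    finally show ?thesis by (simp add: L_def)
  qed
  have b01: "0 \<le> b c z" for c z using sp_bounds[of "q c z"] by (simp add: b_def)
  have one: "\<phi> z = 1" if zK: "z \<in> K" for z
  proof -
    obtain c where c0: "c \<in> F" "z \<in> ball c r" using F(3) zK by (meson UN_E subsetD)
    then have c: "c \<in> F" "dist c z < r" by auto
    have "norm (z - c) < r" using c(2) by (simp add: dist_norm norm_minus_commute)
    then have "norm (z - c)^2 < r^2" by (intro power_strict_mono) auto
    then have "(z - c) \<bullet> (z - c) < r^2" by (simp add: power2_norm_eq_inner)
    then have "q c z \<le> 0" unfolding q_def by (intro divide_nonpos_pos) (use r in auto)
    then have "b c z = 1" by (simp add: b_def sp_le0)
    moreover have "b c z \<le> S z" unfolding S_def
      by (rule member_le_sum[OF c(1)]) (use b01 F(2) in auto)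
    ultimately have "S z \<ge> 1" by simp
    then show ?thesis by (simp add: \<phi>_def sp_ge1)
  qed
  have zero: "\<phi> z = 0" if "z \<notin> C" for z
  proof -
    have "b c z = 0" if "c \<in> F" for c
    proof -
      have "\<not> norm (z - c) < 2 * r" using marg[of c "z - c"] F(1) that \<open>z \<notin> C\<close> by auto
      then have "(2 * r)^2 \<le> norm (z - c)^2" using r by (intro power_mono) auto
      then have "4 * r^2 \<le> (z - c) \<bullet> (z - c)" by (simp add: power2_norm_eq_inner power_mult_distrib)
      moreover have "r^2 > 0" using r by simp
      ultimately have "q c z \<ge> 1" unfolding q_def by (simp add: le_divide_eq)
      then show ?thesis by (simp add: b_def sp_ge1)
    qed
    then have "S z = 0" by (simp add: S_def)
    then show ?thesis by (simp add: \<phi>_def sp_le0)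
  qed
  show ?thesis
    apply (rule exI[of _ \<phi>], rule exI[of _ \<phi>'], rule exI[of _ L])
    using dphi cphi' bphi' sp_bounds one zero by (auto simp: \<phi>_def)
qed



lemma norm_sum_le:
  assumes N: "is_norm N" and "finite A"
  shows "N (\<Sum>i\<in>A. f i) \<le> (\<Sum>i\<in>A. N (f i))"
  using assms(2)
proof (induction A rule: finite_induct)
  case empty
  have "N 0 = 0" using N by (simp add: is_norm_def)
  then show ?case by simp
next
  case (insert x F)
  have "N (f x + sum f F) \<le> N (f x) + N (sum f F)" using N by (simp add: is_norm_def)
  then show ?case using insert by simp
qed

lemma norm_upper:
  fixes N :: "'a::euclidean_space \<Rightarrow> real"
  assumes N: "is_norm N"
  shows "\<exists>M>0. \<forall>w. N w \<le> M * norm w"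
proof -
  define M where "M = (\<Sum>b\<in>Basis. N b) + 1"
  have Npos: "\<And>x. 0 \<le> N x" and Nsc: "\<And>c x. N (c *\<^sub>R x) = \<bar>c\<bar> * N x" using N by (auto simp: is_norm_def)
  have M0: "M > 0" unfolding M_def using Npos by (simp add: sum_nonneg add_nonneg_pos)
  have "N w \<le> M * norm w" for w
  proof -
    have "N w = N (\<Sum>b\<in>Basis. (w \<bullet> b) *\<^sub>R b)" by (simp add: euclidean_representation)
    also have "\<dots> \<le> (\<Sum>b\<in>Basis. N ((w \<bullet> b) *\<^sub>R b))" by (rule norm_sum_le[OF N]) simp
    also have "\<dots> = (\<Sum>b\<in>Basis. \<bar>w \<bullet> b\<bar> * N b)" by (simp add: Nsc)
    also have "\<dots> \<le> (\<Sum>b\<in>Basis. norm w * N b)"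
      by (intro sum_mono mult_right_mono Npos) (simp add: Basis_le_norm)
    also have "\<dots> = norm w * (\<Sum>b\<in>Basis. N b)" by (simp add: sum_distrib_left)
    also have "\<dots> \<le> M * norm w" unfolding M_def by (simp add: algebra_simps)
    finally show ?thesis .
  qed
  then show ?thesis using M0 by blast
qed

lemma norm_cont:
  fixes N :: "'a::euclidean_space \<Rightarrow> real"
  assumes N: "is_norm N"
  shows "continuous_on UNIV N"
proof -
  obtain M where M: "M > 0" "\<And>w. N w \<le> M * norm w" using norm_upper[OF N] by blast
  have tri: "\<And>x y. N (x + y) \<le> N x + N y" using N by (auto simp: is_norm_def)
  have sc: "\<And>c x. N (c *\<^sub>R x) = \<bar>c\<bar> * N x" using N by (auto simp: is_norm_def)
  have d: "\<bar>N x - N y\<bar> \<le> M * norm (x - y)" for x y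
  proof -
    have "N x \<le> N (x - y) + N y" using tri[of "x - y" y] by simp
    moreover have "N y \<le> N (y - x) + N x" using tri[of "y - x" x] by simp
    moreover have "N (y - x) = N (x - y)" using sc[of "-1" "x - y"] by simp
    ultimately have "\<bar>N x - N y\<bar> \<le> N (x - y)" by linarith
    also have "\<dots> \<le> M * norm (x - y)" by (rule M(2))
    finally show ?thesis .
  qed
  show ?thesis
  proof (rule continuous_onI)
    fix x e assume "x \<in> (UNIV::'a set)" "(0::real) < e"
    show "\<exists>d>0. \<forall>x'\<in>UNIV. dist x' x < d \<longrightarrow> dist (N x') (N x) \<le> e"
    proof (intro exI[of _ "e / M"] conjI ballI impI)
      show "0 < e / M" using M \<open>0 < e\<close> by simp
      fix x' assume "dist x' x < e / M"
      then have "M * norm (x' - x) < e" using M by (simp add: dist_norm field_simps)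
      then show "dist (N x') (N x) \<le> e" using d[of x' x] by (simp add: dist_real_def)
    qed
  qed
qed

lemma norm_lower:
  fixes N :: "'a::euclidean_space \<Rightarrow> real"
  assumes N: "is_norm N"
  shows "\<exists>m>0. \<forall>w. m * norm w \<le> N w"
proof -
  have cN: "continuous_on UNIV N" by (rule norm_cont[OF N])
  have pos: "\<And>x. x \<noteq> 0 \<Longrightarrow> N x > 0" using N by (auto simp: is_norm_def less_le)
  have sc: "\<And>c x. N (c *\<^sub>R x) = \<bar>c\<bar> * N x" using N by (auto simp: is_norm_def)
  let ?S = "sphere (0::'a) 1"
  have "compact ?S" by simp
  moreover have "?S \<noteq> {}" by (simp add: sphere_eq_empty)
  ultimately obtain y where y: "y \<in> ?S" "\<And>x. x \<in> ?S \<Longrightarrow> N y \<le> N x"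
    using continuous_attains_inf[of ?S N] continuous_on_subset[OF cN] by blast
  have "y \<noteq> 0" using y(1) by auto
  then have y0: "N y > 0" using pos by blast
  have "N y * norm w \<le> N w" for w
  proof (cases "w = 0")
    case True then show ?thesis using N by (simp add: is_norm_def)
  next
    case False
    have "N y \<le> N ((1 / norm w) *\<^sub>R w)" using y(2)[of "(1 / norm w) *\<^sub>R w"] False by simp
    also have "\<dots> = N w / norm w" using sc by simp
    finally show ?thesis using False by (simp add: field_simps)
  qed
  then show ?thesis using y0 by blast
qed

lemma norm_sublevel_compact:
  fixes N :: "'a::euclidean_space \<Rightarrow> real"
  assumes N: "is_norm N"
  shows "compact {z. N z \<le> a}"
proof -
  obtain m where m: "m > 0" "\<And>w. m * norm w \<le> N w" using norm_lower[OF N] by blast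
  have "closed {z. N z \<le> a}"
    using closed_Collect_le[OF norm_cont[OF N] continuous_on_const, of a] by simp
  moreover have "bounded {z. N z \<le> a}"
  proof -
    have "{z. N z \<le> a} \<subseteq> cball 0 (a / m)"
    proof
      fix z assume "z \<in> {z. N z \<le> a}"
      then have "m * norm z \<le> a" using m(2)[of z] by simp
      then show "z \<in> cball 0 (a / m)" using m(1) by (simp add: field_simps)
    qed
    then show ?thesis using bounded_cball bounded_subset by blast
  qed
  ultimately show ?thesis by (simp add: compact_eq_bounded_closed)
qed



theorem lemma4:
  fixes \<epsilon> \<delta> :: real
  assumes "\<epsilon> > 0" and "0 < \<delta>" and "\<delta> < 1"
  shows "\<exists>\<kappa>::real. 0 < \<kappa> \<and> \<kappa> < 1 \<and>
    (\<forall>C :: 'a::euclidean_space set. is_ball C \<longrightarrow>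
      (\<exists>\<tau>s::real. \<tau>s > 0 \<and>
        (\<forall>\<tau>. 0 < \<tau> \<and> \<tau> < \<tau>s \<longrightarrow>
          (\<exists>H :: 'a \<times> real \<Rightarrow> 'a \<times> real. C1_diffeo H \<and>
             (\<forall>x. \<exists>H'. (H has_derivative H') (at x) \<and> onorm (\<lambda>v. H' v - v) \<le> \<epsilon>) \<and>
             (\<forall>p. p \<notin> C \<times> {-\<tau>..\<tau>} \<longrightarrow> H p = p) \<and>
             (\<forall>z t. (z, t) \<in> (\<lambda>p. (1 - \<delta>) *\<^sub>R p) ` (C \<times> {-\<tau>..\<tau>}) \<longrightarrow>
                H (z, t) = (z, \<kappa> * t))))))"
proof -
  define c where "c = min \<epsilon> (1/2)"
  define Kd where "Kd = 4 / (1 - (1 - \<delta>)^2)"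
  define s where "s = c / (2 * (1 + Kd))"
  have c0: "0 < c" "c \<le> \<epsilon>" "c \<le> 1/2" using assms by (auto simp: c_def)
  have X: "1 - (1 - \<delta>)^2 > 0"
  proof -
    have "(1 - \<delta>)^2 < 1^2" using assms by (intro power_strict_mono) auto
    then show ?thesis by simp
  qed
  have Kd0: "Kd > 0" using X by (simp add: Kd_def)
  have s0: "0 < s" using c0 Kd0 by (simp add: s_def)
  have s1: "s \<le> 1/4"
  proof -
    have "s \<le> c / 2" unfolding s_def using c0 Kd0 by (intro divide_left_mono) auto
    then show ?thesis using c0 by simp
  qed
  have sKd: "s * (1 + Kd) = c / 2" using Kd0 unfolding s_def by (simp add: field_simps)
  show ?thesis
  proof (rule exI[of _ "1 - s"], intro conjI allI impI)
    show "0 < 1 - s" "1 - s < 1" using s0 s1 by auto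
    fix C :: "'a set" assume "is_ball C"
    then obtain N where N: "is_norm N" and Ceq: "C = {x. N x \<le> 1}" by (auto simp: is_ball_def)
    have tri: "\<And>x y. N (x + y) \<le> N x + N y" and sc: "\<And>a x. N (a *\<^sub>R x) = \<bar>a\<bar> * N x"
      using N by (auto simp: is_norm_def)
    obtain M where M: "M > 0" "\<And>w. N w \<le> M * norm w" using norm_upper[OF N] by blast
    define K where "K = {z. N z \<le> 1 - \<delta>}"
    define r where "r = \<delta> / (2 * M)"
    have r0: "r > 0" using M assms by (simp add: r_def)
    have Kc: "compact K" unfolding K_def by (rule norm_sublevel_compact[OF N])
    have marg: "z + w \<in> C" if "z \<in> K" "norm w < 2 * r" for z w
    proof -
      have "N w \<le> M * norm w" by (rule M(2))
      also have "\<dots> \<le> M * (2 * r)" using that(2) M(1) by simp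
      also have "\<dots> = \<delta>" using M(1) by (simp add: r_def)
      finally have "N (z + w) \<le> 1" using tri[of z w] that(1) by (simp add: K_def)
      then show ?thesis by (simp add: Ceq)
    qed
    obtain \<phi> \<phi>' L where dphi: "\<And>z. (\<phi> has_derivative \<phi>' z) (at z)"
      and cphi': "\<And>v. continuous_on UNIV (\<lambda>z. \<phi>' z v)"
      and bphi': "\<And>z v. \<bar>\<phi>' z v\<bar> \<le> L * norm v" and phi01: "\<And>z. 0 \<le> \<phi> z \<and> \<phi> z \<le> 1"
      and phi1: "\<And>z. z \<in> K \<Longrightarrow> \<phi> z = 1" and phi0: "\<And>z. z \<notin> C \<Longrightarrow> \<phi> z = 0"
      using bump_exists[OF Kc r0 marg] by blast
    define L1 where "L1 = \<bar>L\<bar> + 1"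
    have L1: "L1 > 0" "\<And>z v. \<bar>\<phi>' z v\<bar> \<le> L1 * norm v"
    proof -
      show "L1 > 0" by (simp add: L1_def)
      fix z v :: 'a
      have "L * norm v \<le> L1 * norm v" by (intro mult_right_mono) (auto simp: L1_def)
      then show "\<bar>\<phi>' z v\<bar> \<le> L1 * norm v" using bphi'[of z v] by linarith
    qed
    show "\<exists>\<tau>s>0. \<forall>\<tau>. 0 < \<tau> \<and> \<tau> < \<tau>s \<longrightarrow>
          (\<exists>H :: 'a \<times> real \<Rightarrow> 'a \<times> real. C1_diffeo H \<and>
             (\<forall>x. \<exists>H'. (H has_derivative H') (at x) \<and> onorm (\<lambda>v. H' v - v) \<le> \<epsilon>) \<and>
             (\<forall>p. p \<notin> C \<times> {-\<tau>..\<tau>} \<longrightarrow> H p = p) \<and>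
             (\<forall>z t. (z, t) \<in> (\<lambda>p. (1 - \<delta>) *\<^sub>R p) ` (C \<times> {-\<tau>..\<tau>}) \<longrightarrow>
                H (z, t) = (z, (1 - s) * t)))"
    proof (rule exI[of _ "c / (2 * L1)"], intro conjI allI impI)
      show "0 < c / (2 * L1)" using c0 L1 by simp
      fix \<tau> assume \<tau>: "0 < \<tau> \<and> \<tau> < c / (2 * L1)"
      obtain \<psi> \<psi>' where dpsi: "\<And>t. (\<psi> has_real_derivative \<psi>' t) (at t)"
        and cpsi': "continuous_on UNIV \<psi>'" and bpsi: "\<And>t. \<bar>\<psi> t\<bar> \<le> s * \<tau>"
        and bpsi': "\<And>t. \<bar>\<psi>' t\<bar> \<le> s * (1 + Kd)"
        and psi0: "\<And>t. \<tau> \<le> \<bar>t\<bar> \<Longrightarrow> \<psi> t = 0"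
        and psil: "\<And>t. \<bar>t\<bar> \<le> (1 - \<delta>) * \<tau> \<Longrightarrow> \<psi> t = - s * t"
        using psi_exists[of \<tau> \<delta> s] \<tau> assms s0 unfolding Kd_def by auto
      define u where "u p = \<phi> (fst p) * \<psi> (snd p)" for p :: "'a \<times> real"
      define u' where "u' x v = \<phi>' (fst x) (fst v) * \<psi> (snd x) + \<phi> (fst x) * (\<psi>' (snd x) * snd v)"
        for x v :: "'a \<times> real"
      have du: "(u has_derivative u' x) (at x)" for x
      proof -
        have d1: "((\<lambda>p. \<phi> (fst p)) has_derivative (\<lambda>v. \<phi>' (fst x) (fst v))) (at x)"
          using has_derivative_compose[OF has_derivative_fst[OF has_derivative_ident] dphi[of "fst x"]] by simp
        have d2: "((\<lambda>p. \<psi> (snd p)) has_derivative (\<lambda>v. \<psi>' (snd x) * snd v)) (at x)"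
          using has_derivative_compose[OF has_derivative_snd[OF has_derivative_ident]
              dpsi[of "snd x", unfolded has_field_derivative_def]] by (simp add: mult.commute)
        show ?thesis unfolding u_def[abs_def] u'_def
          using has_derivative_mult[OF d1 d2] by (simp add: algebra_simps)
      qed
      have cphi: "continuous_on UNIV \<phi>"
        using dphi has_derivative_continuous continuous_at_imp_continuous_on by blast
      have cpsi: "continuous_on UNIV \<psi>"
        using dpsi DERIV_isCont continuous_at_imp_continuous_on by blast
      have cu': "continuous_on UNIV (\<lambda>x. u' x v)" for v
        unfolding u'_def
        by (intro continuous_intros continuous_on_compose2[OF cphi' continuous_on_fst]
            continuous_on_compose2[OF cphi continuous_on_fst]
            continuous_on_compose2[OF cpsi continuous_on_snd]
            continuous_on_compose2[OF cpsi' continuous_on_snd] continuous_on_id) auto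
      have bu: "\<bar>u' x v\<bar> \<le> c * norm v" for x v
      proof -
        have n1: "norm (fst v) \<le> norm v" and n2: "\<bar>snd v\<bar> \<le> norm v"
          by (auto simp: norm_Pair intro: real_sqrt_le_mono simp add: norm_prod_def)
        have "\<bar>\<phi>' (fst x) (fst v) * \<psi> (snd x)\<bar> \<le> (L1 * norm v) * (s * \<tau>)"
          unfolding abs_mult
          using L1(2)[of "fst x" "fst v"] n1 L1(1) bpsi[of "snd x"]
          by (intro mult_mono) (auto intro: order_trans mult_left_mono)
        also have "\<dots> \<le> (c / 2) * norm v"
        proof -
          have "L1 * (s * \<tau>) \<le> L1 * (1 * (c / (2 * L1)))"
            using s1 s0 \<tau> L1(1) by (intro mult_left_mono mult_mono) auto
          also have "\<dots> = c / 2" using L1(1) by simp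
          finally have "L1 * (s * \<tau>) \<le> c / 2" .
          from mult_right_mono[OF this norm_ge_zero[of v]] show ?thesis by (simp add: algebra_simps)
        qed
        finally have t1: "\<bar>\<phi>' (fst x) (fst v) * \<psi> (snd x)\<bar> \<le> (c / 2) * norm v" .
        have "\<bar>\<phi> (fst x) * (\<psi>' (snd x) * snd v)\<bar> \<le> 1 * ((s * (1 + Kd)) * norm v)"
          unfolding abs_mult using phi01[of "fst x"] bpsi'[of "snd x"] n2 s0 Kd0
          by (intro mult_mono) auto
        then have t2: "\<bar>\<phi> (fst x) * (\<psi>' (snd x) * snd v)\<bar> \<le> (c / 2) * norm v" using sKd by simp
        show ?thesis unfolding u'_def
          using t1 t2 abs_triangle_ineq[of "\<phi>' (fst x) (fst v) * \<psi> (snd x)" "\<phi> (fst x) * (\<psi>' (snd x) * snd v)"]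
          by linarith
      qed
      have c1: "c < 1" using c0 by simp
      note P = perturb_diffeo[of u u' c, OF du cu' bu less_imp_le[OF c0(1)] c1]
      show "\<exists>H :: 'a \<times> real \<Rightarrow> 'a \<times> real. C1_diffeo H \<and>
             (\<forall>x. \<exists>H'. (H has_derivative H') (at x) \<and> onorm (\<lambda>v. H' v - v) \<le> \<epsilon>) \<and>
             (\<forall>p. p \<notin> C \<times> {-\<tau>..\<tau>} \<longrightarrow> H p = p) \<and>
             (\<forall>z t. (z, t) \<in> (\<lambda>p. (1 - \<delta>) *\<^sub>R p) ` (C \<times> {-\<tau>..\<tau>}) \<longrightarrow>
                H (z, t) = (z, (1 - s) * t))"
      proof (rule exI[of _ "\<lambda>p. (fst p, snd p + u p)"], intro conjI allI impI)
        show "C1_diffeo (\<lambda>p. (fst p, snd p + u p))" by (rule P(1))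
        fix x :: "'a \<times> real"
        show "\<exists>H'. ((\<lambda>p. (fst p, snd p + u p)) has_derivative H') (at x) \<and> onorm (\<lambda>v. H' v - v) \<le> \<epsilon>"
          using P(2)[of x] P(3)[of x] c0 by force
      next
        fix p :: "'a \<times> real" assume p: "p \<notin> C \<times> {-\<tau>..\<tau>}"
        have "u p = 0"
        proof (cases "fst p \<in> C")
          case True
          then have "\<tau> \<le> \<bar>snd p\<bar>" using p by (cases p) auto
          then show ?thesis by (simp add: u_def psi0)
        next
          case False then show ?thesis by (simp add: u_def phi0)
        qed
        then show "(fst p, snd p + u p) = p" by simp
      next
        fix z t assume "(z, t) \<in> (\<lambda>p. (1 - \<delta>) *\<^sub>R p) ` (C \<times> {-\<tau>..\<tau>})"
        then obtain p where pC: "p \<in> C \<times> {-\<tau>..\<tau>}" and pe: "(z, t) = (1 - \<delta>) *\<^sub>R p" by blast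
        obtain z0 t0 where pp: "p = (z0, t0)" by (cases p)
        have zt: "z = (1 - \<delta>) *\<^sub>R z0" "t = (1 - \<delta>) * t0" "z0 \<in> C" "\<bar>t0\<bar> \<le> \<tau>"
          using pC pe unfolding pp by auto
        have "N z \<le> 1 - \<delta>"
        proof -
          have "N z = (1 - \<delta>) * N z0" using zt(1) sc assms by simp
          also have "\<dots> \<le> (1 - \<delta>) * 1" using zt(3) assms by (intro mult_left_mono) (auto simp: Ceq)
          finally show ?thesis by simp
        qed
        then have "\<phi> z = 1" by (intro phi1) (simp add: K_def)
        moreover have "\<bar>t\<bar> \<le> (1 - \<delta>) * \<tau>" using zt(2,4) assms by (simp add: abs_mult mult_left_mono)
        ultimately have "u (z, t) = - s * t" by (simp add: u_def psil)
        then show "(fst (z, t), snd (z, t) + u (z, t)) = (z, (1 - s) * t)" by (simp add: algebra_simps)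
      qed
    qed
  qed
qed

end
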